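(* Let $X$ be a finite set and let $c$ be a choice correspondence on $X$ that admits a minimal compromise representation. Then $c$ satisfies axiom $\beta$: for all $x,y\in X$ and menus $A\subset B$, if $x,y\in A$, $x,y\in c(A)$ and $y\in c(B)$, then $x\in c(B)$. However, $c$ need not satisfy axiom $\alpha$: there exists a choice correspondence admitting a minimal compromise representation and menus $B\subset A$ and $x\in B$ with $x\in c(A)$ but $x\notin c(B)$.
   Context: A menu is a nonempty subset of $X$. A choice correspondence is a map $c$ assigning to each menu $A$ a nonempty subset $c(A)\subseteq A$. A weak order is a complete and transitive binary relation on $X$; a linear order is an antisymmetric weak order. For a weak order $R$ and menu $A$, $\max(A,R)=\{x\in A: xRy \text{ for all } y\in A\}$. For a linear order $L$, $\min(A,L)$ denotes the unique $x\in A$ with $yLx$ for all $y\in A$. A choice correspondence $c$ admits a minimal compromise representation if there exist a weak order $R$ and a linear order $L$ on $X$ such that for every menu $A$: $c(A)=\max(A,R)$ if $\max(A,R)$ is a singleton, and $c(A)=\max(A,R)\setminus\{\min(\max(A,R),L)\}$ otherwise. *)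

theory Defs
  imports Main
begin

(* The ground set X is a carrier set X :: 'a set; relations are predicates on 'a,
   only their behaviour on X matters. *)

definition menu :: "'a set \<Rightarrow> 'a set \<Rightarrow> bool" where
  "menu X A \<longleftrightarrow> A \<noteq> {} \<and> A \<subseteq> X"

definition choice_corr :: "'a set \<Rightarrow> ('a set \<Rightarrow> 'a set) \<Rightarrow> bool" where
  "choice_corr X c \<longleftrightarrow> (\<forall>A. menu X A \<longrightarrow> c A \<noteq> {} \<and> c A \<subseteq> A)"

definition weak_order :: "'a set \<Rightarrow> ('a \<Rightarrow> 'a \<Rightarrow> bool) \<Rightarrow> bool" where
  "weak_order X R \<longleftrightarrow>
     (\<forall>x\<in>X. \<forall>y\<in>X. R x y \<or> R y x) \<and>
     (\<forall>x\<in>X. \<forall>y\<in>X. \<forall>z\<in>X. R x y \<longrightarrow> R y z \<longrightarrow> R x z)"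

definition linear_order_on' :: "'a set \<Rightarrow> ('a \<Rightarrow> 'a \<Rightarrow> bool) \<Rightarrow> bool" where
  "linear_order_on' X L \<longleftrightarrow> weak_order X L \<and>
     (\<forall>x\<in>X. \<forall>y\<in>X. L x y \<longrightarrow> L y x \<longrightarrow> x = y)"

definition maxR :: "'a set \<Rightarrow> ('a \<Rightarrow> 'a \<Rightarrow> bool) \<Rightarrow> 'a set" where
  "maxR A R = {x\<in>A. \<forall>y\<in>A. R x y}"

definition minL :: "'a set \<Rightarrow> ('a \<Rightarrow> 'a \<Rightarrow> bool) \<Rightarrow> 'a" where
  "minL A L = (THE x. x \<in> A \<and> (\<forall>y\<in>A. L y x))"

definition minimal_compromise_rep :: "'a set \<Rightarrow> ('a set \<Rightarrow> 'a set) \<Rightarrow> bool" where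
  "minimal_compromise_rep X c \<longleftrightarrow>
     (\<exists>R L. weak_order X R \<and> linear_order_on' X L \<and>
        (\<forall>A. menu X A \<longrightarrow>
           c A = (if (\<exists>x. maxR A R = {x}) then maxR A R
                  else maxR A R - {minL (maxR A R) L})))"

definition axiom_beta :: "'a set \<Rightarrow> ('a set \<Rightarrow> 'a set) \<Rightarrow> bool" where
  "axiom_beta X c \<longleftrightarrow>
     (\<forall>x\<in>X. \<forall>y\<in>X. \<forall>A B. menu X A \<longrightarrow> menu X B \<longrightarrow> A \<subset> B \<longrightarrow>
        x \<in> A \<longrightarrow> y \<in> A \<longrightarrow> x \<in> c A \<longrightarrow> y \<in> c A \<longrightarrow> y \<in> c B \<longrightarrow> x \<in> c B)"

definition axiom_alpha :: "'a set \<Rightarrow> ('a set \<Rightarrow> 'a set) \<Rightarrow> bool" where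
  "axiom_alpha X c \<longleftrightarrow>
     (\<forall>A B x. menu X A \<longrightarrow> menu X B \<longrightarrow> B \<subset> A \<longrightarrow> x \<in> B \<longrightarrow> x \<in> c A \<longrightarrow> x \<in> c B)"

end

theory Submission
  imports Defs
begin

lemma lin_min_ex:
  assumes "finite S" "S \<noteq> {}" "S \<subseteq> X" "linear_order_on' X L"
  shows "\<exists>x\<in>S. \<forall>y\<in>S. L y x"
  using assms
proof (induction S rule: finite_ne_induct)
  case (singleton x)
  then have "L x x" unfolding linear_order_on'_def weak_order_def by blast
  then show ?case by simp
next
  case (insert a F)
  have "F \<subseteq> X" using insert.prems by simp
  then obtain m where m: "m \<in> F" "\<forall>y\<in>F. L y m" using insert.IH insert.prems(2) by blast
  have lin: "\<forall>x\<in>X. \<forall>y\<in>X. L x y \<or> L y x"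
    "\<forall>x\<in>X. \<forall>y\<in>X. \<forall>z\<in>X. L x y \<longrightarrow> L y z \<longrightarrow> L x z"
    using insert.prems(2) unfolding linear_order_on'_def weak_order_def by blast+
  have aX: "a \<in> X" "m \<in> X" using insert.prems(1) m \<open>F \<subseteq> X\<close> by auto
  show ?case
  proof (cases "L a m")
    case True
    then show ?thesis using m by auto
  next
    case False
    then have "L m a" using lin aX by blast
    moreover have "\<forall>y\<in>F. L y a"
    proof
      fix y assume "y \<in> F"
      then have "y \<in> X" "L y m" using m \<open>F \<subseteq> X\<close> by auto
      then show "L y a" using lin(2) aX \<open>L m a\<close> by blast
    qed
    moreover have "L a a" using lin aX by blast
    ultimately show ?thesis by auto
  qed
qed

lemma minL_eq:
  assumes "x \<in> S" "\<forall>y\<in>S. L y x" "S \<subseteq> X" "linear_order_on' X L"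
  shows "minL S L = x"
  unfolding minL_def
proof (rule the_equality)
  show "x \<in> S \<and> (\<forall>y\<in>S. L y x)" using assms by auto
  fix z assume "z \<in> S \<and> (\<forall>y\<in>S. L y z)"
  then show "z = x" using assms unfolding linear_order_on'_def by blast
qed

lemma part1:
  assumes "finite X" "minimal_compromise_rep X c"
  shows "axiom_beta X c"
  unfolding axiom_beta_def
proof (intro ballI allI impI)
  fix x y A B
  assume xX: "x \<in> X" and yX: "y \<in> X" and mA: "menu X A" and mB: "menu X B" and sub: "A \<subset> B"
    and xA: "x \<in> A" and yA: "y \<in> A" and xc: "x \<in> c A" and yc: "y \<in> c A" and ycB: "y \<in> c B"
  obtain R L where R: "weak_order X R" and L: "linear_order_on' X L" and
    cdef: "\<And>A. menu X A \<Longrightarrow> c A = (if (\<exists>x. maxR A R = {x}) then maxR A R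
                  else maxR A R - {minL (maxR A R) L})"
    using assms(2) unfolding minimal_compromise_rep_def by blast
  have cA: "c A \<subseteq> maxR A R" and cB: "c B \<subseteq> maxR B R" using cdef[OF mA] cdef[OF mB] by auto
  have AX: "A \<subseteq> X" and BX: "B \<subseteq> X" using mA mB unfolding menu_def by auto
  have Rt: "\<forall>x\<in>X. \<forall>y\<in>X. \<forall>z\<in>X. R x y \<longrightarrow> R y z \<longrightarrow> R x z" using R unfolding weak_order_def by blast
  have yB: "y \<in> maxR B R" using ycB cB by auto
  have xy: "R x y" using xc cA yA unfolding maxR_def by auto
  have xB: "x \<in> maxR B R" using yB xy Rt xX yX BX xA sub unfolding maxR_def by blast
  have MA: "maxR A R = maxR B R \<inter> A"
  proof
    show "maxR A R \<subseteq> maxR B R \<inter> A"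
    proof
      fix z assume z: "z \<in> maxR A R"
      then have "R z y" "z \<in> A" using yA unfolding maxR_def by auto
      then have zX: "z \<in> X" "z \<in> B" using AX sub by auto
      have "\<forall>w\<in>B. R z w"
      proof
        fix w assume "w \<in> B"
        then have "R y w" "w \<in> X" using yB BX unfolding maxR_def by auto
        then show "R z w" using Rt zX yX \<open>R z y\<close> by blast
      qed
      then show "z \<in> maxR B R \<inter> A" using zX \<open>z \<in> A\<close> unfolding maxR_def by blast
    qed
    show "maxR B R \<inter> A \<subseteq> maxR A R" using sub unfolding maxR_def by auto
  qed
  show "x \<in> c B"
  proof (cases "\<exists>u. maxR B R = {u}")
    case True
    then have "x = y" using xB yB by auto
    then show ?thesis using ycB by simp
  next
    case False
    have fin: "finite (maxR B R)" proof -
      have "maxR B R \<subseteq> X" using BX unfolding maxR_def by auto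
      then show ?thesis using assms(1) finite_subset by blast
    qed
    have MBX: "maxR B R \<subseteq> X" using BX unfolding maxR_def by auto
    obtain m where m: "m \<in> maxR B R" "\<forall>z\<in>maxR B R. L z m"
      using lin_min_ex[OF fin _ MBX L] xB by blast
    have mm: "minL (maxR B R) L = m" using minL_eq[OF m MBX L] .
    have "x \<noteq> m"
    proof
      assume xm: "x = m"
      have "\<forall>z\<in>maxR A R. L z x" using m xm MA by auto
      moreover have "x \<in> maxR A R" using xB xA MA by auto
      moreover have "maxR A R \<subseteq> X" using MA MBX by auto
      ultimately have mA': "minL (maxR A R) L = x" using minL_eq L by metis
      show False
      proof (cases "\<exists>u. maxR A R = {u}")
        case True
        then have "x = y" using \<open>x \<in> maxR A R\<close> yc cA by auto
        then show False using ycB cdef[OF mB] False mm xm by auto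
      next
        case F2: False
        then show False using xc cdef[OF mA] mA' by auto
      qed
    qed
    then show ?thesis using cdef[OF mB] False mm xB by auto
  qed
qed

definition dd :: "nat set \<Rightarrow> nat set" where
  "dd A = (if (\<exists>x. maxR A (\<lambda>a b. True) = {x}) then maxR A (\<lambda>a b. True)
                  else maxR A (\<lambda>a b. True) - {minL (maxR A (\<lambda>a b. True)) (\<lambda>a b. a \<ge> b)})"

lemma part2:
  "\<exists>(Y :: nat set) d. finite Y \<and> choice_corr Y d \<and> minimal_compromise_rep Y d \<and>
            (\<exists>A B x. menu Y A \<and> menu Y B \<and> B \<subset> A \<and> x \<in> B \<and> x \<in> d A \<and> x \<notin> d B)"
proof -
  let ?Y = "{0,1,2::nat}"
  have f: "finite ?Y" by simp
  have mT: "\<And>A. maxR A (\<lambda>a b. True) = A" unfolding maxR_def by auto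
  have L: "linear_order_on' ?Y (\<lambda>a b. a \<ge> b)"
    unfolding linear_order_on'_def weak_order_def by auto
  have cc: "choice_corr ?Y dd"
    unfolding choice_corr_def
  proof (intro allI impI)
    fix A assume "menu ?Y A"
    then have "A \<noteq> {}" by (simp add: menu_def)
    then show "dd A \<noteq> {} \<and> dd A \<subseteq> A" unfolding dd_def mT by auto
  qed
  have mc: "minimal_compromise_rep ?Y dd"
    unfolding minimal_compromise_rep_def
    apply (rule exI[of _ "\<lambda>a b. True"], rule exI[of _ "\<lambda>a b. a \<ge> b"])
    using L by (simp add: weak_order_def dd_def)
  have m1: "minL {0,1,2::nat} (\<lambda>a b. a \<ge> b) = 0"
    by (rule minL_eq[OF _ _ _ L]) auto
  have m2: "minL {1,2::nat} (\<lambda>a b. a \<ge> b) = 1"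
    by (rule minL_eq[OF _ _ _ L]) auto
  have a1: "(1::nat) \<in> dd ?Y" unfolding dd_def mT m1 by auto
  have a2: "(1::nat) \<notin> dd {1,2}" unfolding dd_def mT m2 by auto
  have a3: "menu ?Y ?Y" by (simp add: menu_def)
  have a4: "menu ?Y {1,2}" by (simp add: menu_def)
  have a5: "{1,2} \<subset> ?Y"
  proof -
    have "(0::nat) \<notin> {1,2}" by simp
    moreover have "(0::nat) \<in> ?Y" by simp
    ultimately have "{1,2} \<noteq> ?Y" by blast
    then show ?thesis by auto
  qed
  have a6: "(1::nat) \<in> {1,2}" by simp
  have "menu ?Y ?Y \<and> menu ?Y {1,2} \<and> {1,2} \<subset> ?Y \<and> (1::nat) \<in> {1,2} \<and> 1 \<in> dd ?Y \<and> 1 \<notin> dd {1,2}"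
    using a1 a2 a3 a4 a5 a6 by (intro conjI)
  then have "\<exists>A B x. menu ?Y A \<and> menu ?Y B \<and> B \<subset> A \<and> x \<in> B \<and> x \<in> dd A \<and> x \<notin> dd B"
    by (intro exI)
  then show ?thesis using f cc mc
    apply (rule_tac x="?Y" in exI)
    apply (rule_tac x="dd" in exI)
    by (intro conjI)
qed

theorem lemma1:
  fixes X :: "'a set" and c :: "'a set \<Rightarrow> 'a set"
  shows "(finite X \<and> choice_corr X c \<and> minimal_compromise_rep X c \<longrightarrow> axiom_beta X c) \<and>
         (\<exists>(Y :: nat set) d. finite Y \<and> choice_corr Y d \<and> minimal_compromise_rep Y d \<and>
            (\<exists>A B x. menu Y A \<and> menu Y B \<and> B \<subset> A \<and> x \<in> B \<and> x \<in> d A \<and> x \<notin> d B))"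
  using part1 part2 by blast

end
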